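(* Assume the setting in the context and fix $J\subseteq\mathcal J$ and $p\ge1$. Suppose that for every $j\in J$ there is a constant $C_j>0$ such that for every $f\in\mathfrak F_j$, $$|f(x+y)-f(x)|\le C_j\max\big(1,\|y\|^{p-1},\|x\|^{p-1}\big)\|y\|\quad\text{for all }x\in\mathcal X,\ y\in\mathbb{R}^m,$$ that $\mathbb{E}[\|X\|^{2(p-1)}]<\infty$, and that $\{\mu_n\}$ is a strong approximate identity of order $p$. Then for every $j\in J$, $$\sup_{f\in\mathfrak F_j}\mathbb{E}\Big[\Big(\int_{\mathbb{R}^m}\big(f(X+y)-f(X)\big)\mu_n(dy)\Big)^2\Big]\xrightarrow[n\to\infty]{}0\quad\text{and}\quad \sup_{f\in\mathfrak F_j}\sqrt n\Big|\mathbb{E}\Big[\int_{\mathbb{R}^m}\big(f(X+y)-f(X)\big)\mu_n(dy)\Big]\Big|\xrightarrow[n\to\infty]{}0.$$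
   Context: $X$ is a random vector with values in $\mathcal X\subseteq\mathbb{R}^m$ and law $P$. Functions $f_j:\mathbb{R}^{m_j}\times\mathbb{R}^m\to\mathbb{R}^{m_{j-1}}$ ($j=1,\dots,k$) and $f_{k+1}:\mathbb{R}^m\to\mathbb{R}^{m_k}$ are given, $I_j\subset\mathbb{R}^{m_j}$ are fixed compact convex sets, $\mathcal J=\{1,\dots,k+1\}$, and with $f_{j,i}$ the $i$-th coordinate of $f_j$, $\mathfrak F_j=\{f_{j,i}(\eta,\cdot):\ i=1,\dots,m_{j-1},\ \eta\in I_j\}$ for $j\le k$ and $\mathfrak F_{k+1}=\{f_{k+1,i}:i=1,\dots,m_k\}$. A sequence $\{\mu_n\}$ of probability measures on $\mathbb{R}^m$ is a proper approximate convolution identity of order $p\ge1$ if $\mu_n\to\delta_0$ weakly and $\int\|z\|^p\mu_n(dz)<\infty$ for all $n$; it is a strong approximate identity of order $p$ if in addition $\lim_{n\to\infty}\sqrt n\int_{\mathbb{R}^m}\max(\|z\|,\|z\|^p)\,\mu_n(dz)=0$. *)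

theory Defs
  imports "HOL-Probability.Probability"
begin

definition weak_conv_delta0 :: "(nat \<Rightarrow> 'a::euclidean_space measure) \<Rightarrow> bool" where
  "weak_conv_delta0 \<mu> \<longleftrightarrow>
     (\<forall>g::'a \<Rightarrow> real. continuous_on UNIV g \<and> bounded (range g) \<longrightarrow>
        (\<lambda>n. integral\<^sup>L (\<mu> n) g) \<longlonglongrightarrow> g 0)"

definition proper_approx_identity :: "(nat \<Rightarrow> 'a::euclidean_space measure) \<Rightarrow> real \<Rightarrow> bool" where
  "proper_approx_identity \<mu> p \<longleftrightarrow>
     (\<forall>n. prob_space (\<mu> n) \<and> sets (\<mu> n) = sets borel) \<and>
     weak_conv_delta0 \<mu> \<and>
     (\<forall>n. integrable (\<mu> n) (\<lambda>z. norm z powr p))"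

definition strong_approx_identity :: "(nat \<Rightarrow> 'a::euclidean_space measure) \<Rightarrow> real \<Rightarrow> bool" where
  "strong_approx_identity \<mu> p \<longleftrightarrow>
     proper_approx_identity \<mu> p \<and>
     (\<lambda>n. sqrt (real n) * integral\<^sup>L (\<mu> n) (\<lambda>z. max (norm z) (norm z powr p)))
        \<longlonglongrightarrow> 0"

text \<open>Parameters are encoded as finitely supported vectors \<open>nat \<Rightarrow> real\<close> with coordinates
  \<open>1..m j\<close>; \<open>f j i \<eta> x\<close> is the \<open>i\<close>-th coordinate of \<open>f_j(\<eta>,x)\<close> (\<open>j \<le> k\<close>),
  \<open>g i x\<close> is the \<open>i\<close>-th coordinate of \<open>f_{k+1}(x)\<close>.\<close>
definition param_set_ok :: "nat \<Rightarrow> (nat \<Rightarrow> real) set \<Rightarrow> bool" where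
  "param_set_ok d S \<longleftrightarrow>
     S \<subseteq> {\<eta>. \<forall>i. i \<notin> {1..d} \<longrightarrow> \<eta> i = 0} \<and> compact S \<and>
     (\<forall>x\<in>S. \<forall>y\<in>S. \<forall>t::real. 0 \<le> t \<and> t \<le> 1 \<longrightarrow> (\<lambda>i. t * x i + (1 - t) * y i) \<in> S)"

definition Fclass ::
  "nat \<Rightarrow> (nat \<Rightarrow> nat) \<Rightarrow> (nat \<Rightarrow> (nat \<Rightarrow> real) set) \<Rightarrow>
   (nat \<Rightarrow> nat \<Rightarrow> (nat \<Rightarrow> real) \<Rightarrow> 'a \<Rightarrow> real) \<Rightarrow> (nat \<Rightarrow> 'a \<Rightarrow> real) \<Rightarrow> nat \<Rightarrow> ('a \<Rightarrow> real) set" where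
  "Fclass k m I f g j =
     (if j \<le> k then {f j i \<eta> | i \<eta>. i \<in> {1..m (j - 1)} \<and> \<eta> \<in> I j}
      else {g i | i. i \<in> {1..m k}})"

end

theory Submission
  imports Defs
begin

lemma abs_int_le:
  fixes F G :: "'b \<Rightarrow> real"
  assumes G: "integrable N G" and le: "\<And>x. x \<in> space N \<Longrightarrow> \<bar>F x\<bar> \<le> G x"
  shows "\<bar>integral\<^sup>L N F\<bar> \<le> integral\<^sup>L N G"
proof (cases "integrable N F")
  case True
  have "\<bar>integral\<^sup>L N F\<bar> \<le> integral\<^sup>L N (\<lambda>x. norm (F x))"
    using integral_norm_bound[of N F] by simp
  also have "\<dots> \<le> integral\<^sup>L N G"
    using True G le by (intro integral_mono) auto
  finally show ?thesis .
next
  case False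
  have "0 \<le> integral\<^sup>L N G"
    by (rule integral_nonneg_AE, rule AE_I2) (meson abs_ge_zero order_trans le)
  then show ?thesis using False by (simp add: not_integrable_integral_eq)
qed

lemma norm_le_powr:
  fixes t p :: real assumes "t \<ge> 0" "p \<ge> 1"
  shows "t \<le> 1 + t powr p"
proof (cases "t \<le> 1")
  case True then show ?thesis by (simp add: add_increasing2)
next
  case False
  then have "t powr 1 \<le> t powr p" using assms by (intro powr_mono) auto
  then show ?thesis using False by simp
qed

lemma pointwise_bound:
  fixes x y :: "'a::euclidean_space" and h :: "'a \<Rightarrow> real"
  assumes p: "p \<ge> 1" and C: "C > 0"
    and g: "\<bar>h (x + y) - h x\<bar> \<le> C * max 1 (max (norm y powr (p - 1)) (norm x powr (p - 1))) * norm y"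
  shows "\<bar>h (x + y) - h x\<bar> \<le> C * (2 + norm x powr (p - 1)) * max (norm y) (norm y powr p)"
proof -
  define a where "a = norm x powr (p - 1)"
  define b where "b = norm y powr (p - 1)"
  define t where "t = norm y"
  have a0: "a \<ge> 0" and b0: "b \<ge> 0" and t0: "t \<ge> 0" by (auto simp: a_def b_def t_def)
  have tb: "t * b \<le> max t (norm y powr p)"
  proof (cases "t = 0")
    case True then show ?thesis by (simp)
  next
    case False
    then have "t * b = norm y powr p" unfolding t_def b_def
      by (simp add: powr_mult_base)
    then show ?thesis by simp
  qed
  have "max 1 (max b a) * t \<le> (1 + b + a) * t"
    using a0 b0 t0 by (intro mult_right_mono) auto
  also have "\<dots> = t + t * b + a * t" by (simp add: algebra_simps)
  also have "\<dots> \<le> max t (norm y powr p) + max t (norm y powr p) + a * max t (norm y powr p)"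
    using tb a0 by (intro add_mono mult_left_mono) auto
  also have "\<dots> = (2 + a) * max t (norm y powr p)" by (simp add: algebra_simps)
  finally have "C * (max 1 (max b a) * t) \<le> C * ((2 + a) * max t (norm y powr p))"
    using C by simp
  then show ?thesis using g unfolding a_def b_def t_def by (simp add: mult.assoc)
qed

theorem mainTheorem2:
  fixes M :: "'w measure" and X :: "'w \<Rightarrow> 'a::euclidean_space" and \<X> :: "'a set"
    and k :: nat and m :: "nat \<Rightarrow> nat" and I :: "nat \<Rightarrow> (nat \<Rightarrow> real) set"
    and f :: "nat \<Rightarrow> nat \<Rightarrow> (nat \<Rightarrow> real) \<Rightarrow> 'a \<Rightarrow> real" and g :: "nat \<Rightarrow> 'a \<Rightarrow> real"
    and J :: "nat set" and p :: real and \<mu> :: "nat \<Rightarrow> 'a measure"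
  assumes M: "prob_space M"
    and X_meas: "X \<in> borel_measurable M"
    and X_vals: "\<forall>\<omega>\<in>space M. X \<omega> \<in> \<X>"
    and I_ok: "\<forall>j\<in>{1..k}. param_set_ok (m j) (I j)"
    and J: "J \<subseteq> {1..k+1}"
    and p: "p \<ge> 1"
    and F_meas: "\<forall>j\<in>J. \<forall>h\<in>Fclass k m I f g j. h \<in> borel_measurable borel"
    and growth: "\<forall>j\<in>J. \<exists>C>0. \<forall>h\<in>Fclass k m I f g j. \<forall>x\<in>\<X>. \<forall>y.
        \<bar>h (x + y) - h x\<bar> \<le> C * max 1 (max (norm y powr (p - 1)) (norm x powr (p - 1))) * norm y"
    and moment: "integrable M (\<lambda>\<omega>. norm (X \<omega>) powr (2 * (p - 1)))"
    and mu: "strong_approx_identity \<mu> p"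
  shows "\<forall>j\<in>J.
     (\<lambda>n. SUP h\<in>Fclass k m I f g j.
        ennreal (integral\<^sup>L M (\<lambda>\<omega>. (integral\<^sup>L (\<mu> n) (\<lambda>y. h (X \<omega> + y) - h (X \<omega>)))\<^sup>2)))
        \<longlonglongrightarrow> 0 \<and>
     (\<lambda>n. SUP h\<in>Fclass k m I f g j.
        ennreal (sqrt (real n) *
          \<bar>integral\<^sup>L M (\<lambda>\<omega>. integral\<^sup>L (\<mu> n) (\<lambda>y. h (X \<omega> + y) - h (X \<omega>)))\<bar>))
        \<longlonglongrightarrow> 0"
proof (intro ballI)
  fix j assume jJ: "j \<in> J"
  define F where "F = Fclass k m I f g j"
  obtain C where C: "C > 0" and Cg: "\<forall>h\<in>F. \<forall>x\<in>\<X>. \<forall>y.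
        \<bar>h (x + y) - h x\<bar> \<le> C * max 1 (max (norm y powr (p - 1)) (norm x powr (p - 1))) * norm y"
    using growth jJ unfolding F_def by blast
  define \<phi> :: "'a \<Rightarrow> real" where "\<phi> = (\<lambda>y. max (norm y) (norm y powr p))"
  define e where "e = (\<lambda>n. integral\<^sup>L (\<mu> n) \<phi>)"
  have pa: "proper_approx_identity \<mu> p" and se: "(\<lambda>n. sqrt (real n) * e n) \<longlonglongrightarrow> 0"
    using mu unfolding strong_approx_identity_def e_def \<phi>_def by auto
  have ps: "prob_space (\<mu> n)" and sb: "sets (\<mu> n) = sets borel"
    and pint: "integrable (\<mu> n) (\<lambda>z. norm z powr p)" for n
    using pa unfolding proper_approx_identity_def by auto
  have phi_int: "integrable (\<mu> n) \<phi>" for n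
  proof (rule Bochner_Integration.integrable_bound)
    show "integrable (\<mu> n) (\<lambda>z. 1 + norm z powr p)"
      by (rule Bochner_Integration.integrable_add[OF finite_measure.integrable_const[OF prob_space.finite_measure[OF ps[of n]]] pint[of n]])
    have "\<phi> \<in> borel_measurable borel" unfolding \<phi>_def by measurable
    then show "\<phi> \<in> borel_measurable (\<mu> n)" using measurable_cong_sets[OF sb[of n] refl] by blast
    show "AE x in \<mu> n. norm (\<phi> x) \<le> norm (1 + norm x powr p)"
    proof (rule AE_I2)
      fix x :: 'a
      have "norm x \<le> 1 + norm x powr p" by (rule norm_le_powr[OF _ p]) simp
      moreover have "norm x powr p \<ge> 0" by simp
      ultimately show "norm (\<phi> x) \<le> norm (1 + norm x powr p)"
        unfolding \<phi>_def real_norm_def by (smt (verit))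
    qed
  qed
  have e0: "e n \<ge> 0" for n
    unfolding e_def \<phi>_def by (rule integral_nonneg_AE, rule AE_I2) (simp add: le_max_iff_disj)
  have e_lim: "e \<longlonglongrightarrow> 0"
  proof (rule Lim_null_comparison[OF _ se])
    show "\<forall>\<^sub>F n in sequentially. norm (e n) \<le> sqrt (real n) * e n"
    proof (rule eventually_sequentiallyI[of 1])
      fix n :: nat assume "n \<ge> 1"
      then have "sqrt (real n) \<ge> 1" by simp
      then show "norm (e n) \<le> sqrt (real n) * e n" using e0[of n]
        by (simp add: mult_le_cancel_right1)
    qed
  qed
  define a where "a = (\<lambda>\<omega>. norm (X \<omega>) powr (p - 1))"
  define q where "q = (\<lambda>\<omega>. norm (X \<omega>) powr (2 * (p - 1)))"
  define A where "A = integral\<^sup>L M a"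
  define Q where "Q = integral\<^sup>L M q"
  have a0: "a \<omega> \<ge> 0" for \<omega> by (simp add: a_def)
  have aq: "(a \<omega>)\<^sup>2 = q \<omega>" for \<omega>
  proof -
    have "norm (X \<omega>) powr (2 * (p - 1)) = norm (X \<omega>) powr ((p - 1) + (p - 1))" by simp
    also have "\<dots> = norm (X \<omega>) powr (p - 1) * norm (X \<omega>) powr (p - 1)" by (rule powr_add)
    finally show ?thesis unfolding a_def q_def by (simp add: power2_eq_square)
  qed
  have q_int: "integrable M q" using moment by (simp add: q_def)
  have a_int: "integrable M a"
  proof (rule Bochner_Integration.integrable_bound)
    show "integrable M (\<lambda>\<omega>. 1 + q \<omega>)"
      by (rule Bochner_Integration.integrable_add[OF finite_measure.integrable_const[OF prob_space.finite_measure[OF M]] q_int])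
    show "a \<in> borel_measurable M" unfolding a_def using X_meas by measurable
    show "AE x in M. norm (a x) \<le> norm (1 + q x)"
    proof (rule AE_I2)
      fix x
      have "0 \<le> (a x - 1)\<^sup>2" by simp
      then have "a x \<le> 1 + (a x)\<^sup>2" using a0[of x] by (simp add: power2_eq_square algebra_simps)
      moreover have "q x \<ge> 0" by (simp add: q_def)
      ultimately show "norm (a x) \<le> norm (1 + q x)" using a0[of x] aq[of x] by simp
    qed
  qed
  have Dbound: "\<bar>integral\<^sup>L (\<mu> n) (\<lambda>y. h (X \<omega> + y) - h (X \<omega>))\<bar> \<le> C * (2 + a \<omega>) * e n"
    if hF: "h \<in> F" and w: "\<omega> \<in> space M" for h n \<omega>
  proof -
    have xX: "X \<omega> \<in> \<X>" using X_vals w by blast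
    have "\<bar>integral\<^sup>L (\<mu> n) (\<lambda>y. h (X \<omega> + y) - h (X \<omega>))\<bar>
        \<le> integral\<^sup>L (\<mu> n) (\<lambda>y. C * (2 + a \<omega>) * \<phi> y)"
    proof (rule abs_int_le)
      show "integrable (\<mu> n) (\<lambda>y. C * (2 + a \<omega>) * \<phi> y)"
        using phi_int[of n] by (rule Bochner_Integration.integrable_mult_right)
      fix y
      show "\<bar>h (X \<omega> + y) - h (X \<omega>)\<bar> \<le> C * (2 + a \<omega>) * \<phi> y"
        unfolding a_def \<phi>_def
        by (rule pointwise_bound[OF p C]) (use Cg hF xX in blast)
    qed
    also have "\<dots> = C * (2 + a \<omega>) * e n" unfolding e_def by simp
    finally show ?thesis .
  qed
  have part1: "(\<lambda>n. SUP h\<in>F.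
        ennreal (integral\<^sup>L M (\<lambda>\<omega>. (integral\<^sup>L (\<mu> n) (\<lambda>y. h (X \<omega> + y) - h (X \<omega>)))\<^sup>2)))
        \<longlonglongrightarrow> 0"
  proof (rule tendsto_sandwich[of "\<lambda>_. 0" _ _ "\<lambda>n. ennreal ((C * e n)\<^sup>2 * (8 + 2 * Q))"])
    show "\<forall>\<^sub>F n in sequentially. (0::ennreal) \<le> (SUP h\<in>F.
        ennreal (integral\<^sup>L M (\<lambda>\<omega>. (integral\<^sup>L (\<mu> n) (\<lambda>y. h (X \<omega> + y) - h (X \<omega>)))\<^sup>2)))"
      by simp
    show "((\<lambda>_. 0::ennreal) \<longlongrightarrow> 0) sequentially" by simp
    have "(\<lambda>n. (C * e n)\<^sup>2 * (8 + 2 * Q)) \<longlonglongrightarrow> (C * 0)\<^sup>2 * (8 + 2 * Q)"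
      by (intro tendsto_intros e_lim)
    then have "(\<lambda>n. ennreal ((C * e n)\<^sup>2 * (8 + 2 * Q))) \<longlonglongrightarrow> ennreal ((C * 0)\<^sup>2 * (8 + 2 * Q))"
      by (rule tendsto_ennrealI)
    then show "(\<lambda>n. ennreal ((C * e n)\<^sup>2 * (8 + 2 * Q))) \<longlonglongrightarrow> 0" by simp
    show "\<forall>\<^sub>F n in sequentially. (SUP h\<in>F.
        ennreal (integral\<^sup>L M (\<lambda>\<omega>. (integral\<^sup>L (\<mu> n) (\<lambda>y. h (X \<omega> + y) - h (X \<omega>)))\<^sup>2)))
        \<le> ennreal ((C * e n)\<^sup>2 * (8 + 2 * Q))"
    proof (rule always_eventually, intro allI SUP_least ennreal_leI)
      fix n h assume hF: "h \<in> F"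
      define D where "D = (\<lambda>\<omega>. integral\<^sup>L (\<mu> n) (\<lambda>y. h (X \<omega> + y) - h (X \<omega>)))"
      have "\<bar>integral\<^sup>L M (\<lambda>\<omega>. (D \<omega>)\<^sup>2)\<bar> \<le> integral\<^sup>L M (\<lambda>\<omega>. (C * e n)\<^sup>2 * (8 + 2 * q \<omega>))"
      proof (rule abs_int_le)
        show "integrable M (\<lambda>\<omega>. (C * e n)\<^sup>2 * (8 + 2 * q \<omega>))"
          by (intro Bochner_Integration.integrable_mult_right Bochner_Integration.integrable_add finite_measure.integrable_const[OF prob_space.finite_measure[OF M]] q_int)
        fix \<omega> assume w: "\<omega> \<in> space M"
        have b: "\<bar>D \<omega>\<bar> \<le> C * (2 + a \<omega>) * e n" unfolding D_def by (rule Dbound[OF hF w])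
        have "\<bar>(D \<omega>)\<^sup>2\<bar> = \<bar>D \<omega>\<bar>\<^sup>2" by simp
        also have "\<dots> \<le> (C * (2 + a \<omega>) * e n)\<^sup>2"
          using b by (intro power_mono) auto
        also have "\<dots> = (C * e n)\<^sup>2 * (2 + a \<omega>)\<^sup>2" by (simp add: power_mult_distrib)
        also have "\<dots> \<le> (C * e n)\<^sup>2 * (8 + 2 * q \<omega>)"
        proof (rule mult_left_mono)
          have "(2 + a \<omega>)\<^sup>2 \<le> 8 + 2 * (a \<omega>)\<^sup>2"
          proof -
            have "0 \<le> (a \<omega> - 2)\<^sup>2" by simp
            then show ?thesis by (simp add: power2_eq_square algebra_simps)
          qed
          then show "(2 + a \<omega>)\<^sup>2 \<le> 8 + 2 * q \<omega>" using aq by simp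
        qed simp
        finally show "\<bar>(D \<omega>)\<^sup>2\<bar> \<le> (C * e n)\<^sup>2 * (8 + 2 * q \<omega>)" .
      qed
      also have "integral\<^sup>L M (\<lambda>\<omega>. (C * e n)\<^sup>2 * (8 + 2 * q \<omega>)) = (C * e n)\<^sup>2 * (8 + 2 * Q)"
      proof -
        have ic: "integrable M (\<lambda>\<omega>. 8::real)"
          by (rule finite_measure.integrable_const[OF prob_space.finite_measure[OF M]])
        have "integral\<^sup>L M (\<lambda>\<omega>. 8 + 2 * q \<omega>) = integral\<^sup>L M (\<lambda>\<omega>. 8::real) + integral\<^sup>L M (\<lambda>\<omega>. 2 * q \<omega>)"
          by (rule Bochner_Integration.integral_add[OF ic Bochner_Integration.integrable_mult_right[OF q_int]])
        also have "\<dots> = 8 + 2 * Q" using prob_space.prob_space[OF M] unfolding Q_def by simp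
        finally show ?thesis by simp
      qed
      finally show "integral\<^sup>L M (\<lambda>\<omega>. (integral\<^sup>L (\<mu> n) (\<lambda>y. h (X \<omega> + y) - h (X \<omega>)))\<^sup>2)
          \<le> (C * e n)\<^sup>2 * (8 + 2 * Q)" unfolding D_def by simp
    qed
  qed
  have part2: "(\<lambda>n. SUP h\<in>F.
        ennreal (sqrt (real n) *
          \<bar>integral\<^sup>L M (\<lambda>\<omega>. integral\<^sup>L (\<mu> n) (\<lambda>y. h (X \<omega> + y) - h (X \<omega>)))\<bar>))
        \<longlonglongrightarrow> 0"
  proof (rule tendsto_sandwich[of "\<lambda>_. 0" _ _ "\<lambda>n. ennreal (C * (2 + A) * (sqrt (real n) * e n))"])
    show "\<forall>\<^sub>F n in sequentially. (0::ennreal) \<le> (SUP h\<in>F.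
        ennreal (sqrt (real n) *
          \<bar>integral\<^sup>L M (\<lambda>\<omega>. integral\<^sup>L (\<mu> n) (\<lambda>y. h (X \<omega> + y) - h (X \<omega>)))\<bar>))"
      by simp
    show "((\<lambda>_. 0::ennreal) \<longlongrightarrow> 0) sequentially" by simp
    have "(\<lambda>n. C * (2 + A) * (sqrt (real n) * e n)) \<longlonglongrightarrow> C * (2 + A) * 0"
      by (intro tendsto_intros se)
    then have "(\<lambda>n. ennreal (C * (2 + A) * (sqrt (real n) * e n))) \<longlonglongrightarrow> ennreal (C * (2 + A) * 0)"
      by (rule tendsto_ennrealI)
    then show "(\<lambda>n. ennreal (C * (2 + A) * (sqrt (real n) * e n))) \<longlonglongrightarrow> 0" by simp
    show "\<forall>\<^sub>F n in sequentially. (SUP h\<in>F.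
        ennreal (sqrt (real n) *
          \<bar>integral\<^sup>L M (\<lambda>\<omega>. integral\<^sup>L (\<mu> n) (\<lambda>y. h (X \<omega> + y) - h (X \<omega>)))\<bar>))
        \<le> ennreal (C * (2 + A) * (sqrt (real n) * e n))"
    proof (rule always_eventually, intro allI SUP_least ennreal_leI)
      fix n h assume hF: "h \<in> F"
      define D where "D = (\<lambda>\<omega>. integral\<^sup>L (\<mu> n) (\<lambda>y. h (X \<omega> + y) - h (X \<omega>)))"
      have "\<bar>integral\<^sup>L M D\<bar> \<le> integral\<^sup>L M (\<lambda>\<omega>. C * e n * (2 + a \<omega>))"
      proof (rule abs_int_le)
        show "integrable M (\<lambda>\<omega>. C * e n * (2 + a \<omega>))"
          by (intro Bochner_Integration.integrable_mult_right Bochner_Integration.integrable_add finite_measure.integrable_const[OF prob_space.finite_measure[OF M]] a_int)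
        fix \<omega> assume w: "\<omega> \<in> space M"
        show "\<bar>D \<omega>\<bar> \<le> C * e n * (2 + a \<omega>)"
          using Dbound[OF hF w, of n] unfolding D_def by (simp add: algebra_simps)
      qed
      also have "integral\<^sup>L M (\<lambda>\<omega>. C * e n * (2 + a \<omega>)) = C * e n * (2 + A)"
      proof -
        have ic: "integrable M (\<lambda>\<omega>. 2::real)"
          by (rule finite_measure.integrable_const[OF prob_space.finite_measure[OF M]])
        have "integral\<^sup>L M (\<lambda>\<omega>. 2 + a \<omega>) = integral\<^sup>L M (\<lambda>\<omega>. 2::real) + integral\<^sup>L M a"
          by (rule Bochner_Integration.integral_add[OF ic a_int])
        also have "\<dots> = 2 + A" using prob_space.prob_space[OF M] unfolding A_def by simp
        finally show ?thesis by simp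
      qed
      finally have "\<bar>integral\<^sup>L M D\<bar> \<le> C * e n * (2 + A)" .
      then have "sqrt (real n) * \<bar>integral\<^sup>L M D\<bar> \<le> sqrt (real n) * (C * e n * (2 + A))"
        by (intro mult_left_mono) auto
      then show "sqrt (real n) *
          \<bar>integral\<^sup>L M (\<lambda>\<omega>. integral\<^sup>L (\<mu> n) (\<lambda>y. h (X \<omega> + y) - h (X \<omega>)))\<bar>
          \<le> C * (2 + A) * (sqrt (real n) * e n)" unfolding D_def by (simp add: algebra_simps)
    qed
  qed
  show "(\<lambda>n. SUP h\<in>Fclass k m I f g j.
        ennreal (integral\<^sup>L M (\<lambda>\<omega>. (integral\<^sup>L (\<mu> n) (\<lambda>y. h (X \<omega> + y) - h (X \<omega>)))\<^sup>2)))
        \<longlonglongrightarrow> 0 \<and>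
     (\<lambda>n. SUP h\<in>Fclass k m I f g j.
        ennreal (sqrt (real n) *
          \<bar>integral\<^sup>L M (\<lambda>\<omega>. integral\<^sup>L (\<mu> n) (\<lambda>y. h (X \<omega> + y) - h (X \<omega>)))\<bar>))
        \<longlonglongrightarrow> 0"
    using part1 part2 unfolding F_def by blast
qed

end
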